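(* Let $f_{X,Z}$ be a Gaussian latent machine, i.e. $f_{X,Z}(x,z)\propto\prod_{i=1}^m\mathcal{N}\big((Kx)_i;\mu_i(z_i),\sigma_i^2(z_i)\big)\,f_i(z_i)$ with $K\in\mathbb{R}^{m\times n}$, $m\ge n$, of full column rank. Then the marginal density $f_X$ of $X$ is a Gaussian mixture on $\mathbb{R}^n$ of the form $f_X(x)=\int_{\mathcal{Z}}f_Z(z)\cdot\mathcal{N}\big(x;\mu(z),\Sigma(z)\big)\,\mathrm{d}z$, where $f_Z$ is the marginal density of $Z$, $\Sigma(z):=\big(K^\top\Sigma_0^{-1}(z)K\big)^{-1}$ and $\mu(z):=\Sigma(z)K^\top\Sigma_0^{-1}(z)\mu_0(z)$.
   Context: A Gaussian latent machine: $X\in\mathbb{R}^n$, $Z=(Z_1,\dots,Z_m)\in\mathcal{Z}=\mathcal{Z}_1\times\cdots\times\mathcal{Z}_m$, $f_i$ univariate densities on $\mathcal{Z}_i$, $\mu_i:\mathcal{Z}_i\to\mathbb{R}$, $\sigma_i^2:\mathcal{Z}_i\to(0,\infty)$, and $\mathcal{N}(\cdot;\mu,\Sigma)$ the (multivariate) normal density. $\mu_0(z):=(\mu_1(z_1),\dots,\mu_m(z_m))$, $\Sigma_0(z):=\operatorname{diag}(\sigma_1^2(z_1),\dots,\sigma_m^2(z_m))$. *)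

theory Defs
  imports "HOL-Analysis.Analysis" "HOL-Probability.Probability"
begin

definition mvn_density :: "real^'n \<Rightarrow> real^'n^'n \<Rightarrow> real^'n \<Rightarrow> real" where
  "mvn_density mu S x =
     exp (- ((x - mu) \<bullet> (matrix_inv S *v (x - mu))) / 2)
     / sqrt ((2 * pi) ^ CARD('n) * det S)"

definition glm_mu0 :: "('m \<Rightarrow> 'z \<Rightarrow> real) \<Rightarrow> ('m \<Rightarrow> 'z) \<Rightarrow> real^'m" where
  "glm_mu0 mu z = (\<chi> i. mu i (z i))"

definition glm_Sigma0 :: "('m \<Rightarrow> 'z \<Rightarrow> real) \<Rightarrow> ('m \<Rightarrow> 'z) \<Rightarrow> real^'m^'m" where
  "glm_Sigma0 s2 z = (\<chi> i j. if i = j then s2 i (z i) else 0)"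

definition glm_Sigma :: "real^'n^'m \<Rightarrow> ('m \<Rightarrow> 'z \<Rightarrow> real) \<Rightarrow> ('m \<Rightarrow> 'z) \<Rightarrow> real^'n^'n" where
  "glm_Sigma K s2 z = matrix_inv (transpose K ** matrix_inv (glm_Sigma0 s2 z) ** K)"

definition glm_mu :: "real^'n^'m \<Rightarrow> ('m \<Rightarrow> 'z \<Rightarrow> real) \<Rightarrow> ('m \<Rightarrow> 'z \<Rightarrow> real)
    \<Rightarrow> ('m \<Rightarrow> 'z) \<Rightarrow> real^'n" where
  "glm_mu K mu s2 z = glm_Sigma K s2 z *v (transpose K *v (matrix_inv (glm_Sigma0 s2 z) *v glm_mu0 mu z))"

text \<open>Unnormalised joint density prod_i N((Kx)_i; mu_i(z_i), sigma_i^2(z_i)) f_i(z_i).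
  normal_density takes the standard deviation, hence the sqrt.\<close>
definition glm_unnorm :: "real^'n^'m \<Rightarrow> ('m \<Rightarrow> 'z \<Rightarrow> real) \<Rightarrow> ('m \<Rightarrow> 'z \<Rightarrow> real)
    \<Rightarrow> ('m \<Rightarrow> 'z \<Rightarrow> real) \<Rightarrow> real^'n \<Rightarrow> ('m \<Rightarrow> 'z) \<Rightarrow> real" where
  "glm_unnorm K mu s2 f x z =
     (\<Prod>i\<in>UNIV. normal_density (mu i (z i)) (sqrt (s2 i (z i))) ((K *v x) $ i) * f i (z i))"

definition glm_const :: "('m \<Rightarrow> 'z measure) \<Rightarrow> real^'n^'m \<Rightarrow> ('m \<Rightarrow> 'z \<Rightarrow> real)
    \<Rightarrow> ('m \<Rightarrow> 'z \<Rightarrow> real) \<Rightarrow> ('m \<Rightarrow> 'z \<Rightarrow> real) \<Rightarrow> ennreal" where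
  "glm_const M K mu s2 f =
     (\<integral>\<^sup>+ x. (\<integral>\<^sup>+ z. ennreal (glm_unnorm K mu s2 f x z) \<partial>(PiM UNIV M)) \<partial>lborel)"

definition glm_joint :: "('m \<Rightarrow> 'z measure) \<Rightarrow> real^'n^'m \<Rightarrow> ('m \<Rightarrow> 'z \<Rightarrow> real)
    \<Rightarrow> ('m \<Rightarrow> 'z \<Rightarrow> real) \<Rightarrow> ('m \<Rightarrow> 'z \<Rightarrow> real) \<Rightarrow> real^'n \<Rightarrow> ('m \<Rightarrow> 'z) \<Rightarrow> real" where
  "glm_joint M K mu s2 f x z = glm_unnorm K mu s2 f x z / enn2real (glm_const M K mu s2 f)"

definition glm_marg_X :: "('m \<Rightarrow> 'z measure) \<Rightarrow> real^'n^'m \<Rightarrow> ('m \<Rightarrow> 'z \<Rightarrow> real)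
    \<Rightarrow> ('m \<Rightarrow> 'z \<Rightarrow> real) \<Rightarrow> ('m \<Rightarrow> 'z \<Rightarrow> real) \<Rightarrow> real^'n \<Rightarrow> ennreal" where
  "glm_marg_X M K mu s2 f x = (\<integral>\<^sup>+ z. ennreal (glm_joint M K mu s2 f x z) \<partial>(PiM UNIV M))"

definition glm_marg_Z :: "('m \<Rightarrow> 'z measure) \<Rightarrow> real^'n^'m \<Rightarrow> ('m \<Rightarrow> 'z \<Rightarrow> real)
    \<Rightarrow> ('m \<Rightarrow> 'z \<Rightarrow> real) \<Rightarrow> ('m \<Rightarrow> 'z \<Rightarrow> real) \<Rightarrow> ('m \<Rightarrow> 'z) \<Rightarrow> ennreal" where
  "glm_marg_Z M K mu s2 f z = (\<integral>\<^sup>+ x. ennreal (glm_joint M K mu s2 f x z) \<partial>lborel)"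

end

theory Submission
  imports Defs
begin

lemma Basis_vec_range: "(Basis :: (real^'n) set) = range (\<lambda>i. axis i 1)"
  by (auto simp: Basis_vec_def)

lemma prod_Basis_vec: "(\<Prod>b\<in>(Basis :: (real^'n) set). f b) = (\<Prod>i\<in>UNIV. f (axis i 1))"
  unfolding Basis_vec_range by (subst prod.reindex) (auto simp: inj_on_def axis_eq_axis)

lemma emeasure_lborel_box_vec:
  fixes l u :: "real^'n"
  shows "emeasure lborel (box l u) = ennreal (if \<forall>i. l$i \<le> u$i then \<Prod>i\<in>UNIV. (u$i - l$i) else 0)"
  unfolding emeasure_lborel_box_eq prod_Basis_vec
  by (auto simp: cart_eq_inner_axis[symmetric] Basis_vec_range)

lemma distr_lborel_eq_vec:
  fixes T :: "real^'n \<Rightarrow> real^'n"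
  assumes T: "T \<in> borel_measurable borel"
    and eq: "\<And>l u. (\<And>i. l$i \<le> u$i) \<Longrightarrow> emeasure lborel (T -` box l u) = emeasure lborel (box l u)"
  shows "distr lborel borel T = lborel"
proof (rule lborel_eqI[symmetric])
  fix l u :: "real^'n" assume le: "\<And>b. b \<in> Basis \<Longrightarrow> l \<bullet> b \<le> u \<bullet> b"
  then have le': "\<And>i. l$i \<le> u$i" by (simp add: cart_eq_inner_axis Basis_vec_range)
  have "emeasure (distr lborel borel T) (box l u) = emeasure lborel (T -` box l u)"
    using T by (simp add: emeasure_distr)
  also have "\<dots> = emeasure lborel (box l u)" using eq le' by blast
  also have "\<dots> = (\<Prod>b\<in>Basis. (u - l) \<bullet> b)" using le by (simp add: emeasure_lborel_box_eq)
  finally show "emeasure (distr lborel borel T) (box l u) = (\<Prod>b\<in>Basis. (u - l) \<bullet> b)" .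
qed simp

lemma linear_borel_measurable:
  fixes f :: "'a::euclidean_space \<Rightarrow> 'b::euclidean_space"
  shows "linear f \<Longrightarrow> f \<in> borel_measurable borel"
  by (intro borel_measurable_continuous_onI linear_continuous_on) (simp add: linear_conv_bounded_linear)

lemma swap_preserving:
  fixes m n :: "'n::finite"
  shows "distr lborel borel (\<lambda>x::real^'n. \<chi> i. x $ Transposition.transpose m n i) = lborel"
proof (rule distr_lborel_eq_vec)
  let ?T = "\<lambda>x::real^'n. \<chi> i. x $ Transposition.transpose m n i"
  have lin: "linear ?T"
    by (rule linearI) (simp_all add: plus_vec_def scaleR_vec_def)
  show "?T \<in> borel_measurable borel"
    using lin by (rule linear_borel_measurable)
  fix l u :: "real^'n" assume le: "\<And>i. l$i \<le> u$i"
  have "?T -` box l u = box (?T l) (?T u)"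
    by (auto simp: mem_box_cart) (metis transpose_involutory)+
  moreover have "(\<Prod>i\<in>UNIV. (?T u $ i - ?T l $ i)) = (\<Prod>i\<in>UNIV. (u$i - l$i))"
    using prod.permute [OF permutes_swap_id, where S=UNIV and g="\<lambda>i. u$i - l$i", symmetric]
    by (simp add: o_def)
  ultimately show "emeasure lborel (?T -` box l u) = emeasure lborel (box l u)"
    using le by (simp add: emeasure_lborel_box_vec)
qed

lemma shear_preserving:
  fixes m n :: "'n::finite"
  assumes "m \<noteq> n"
  shows "distr lborel borel (\<lambda>x::real^'n. \<chi> i. if i = m then x$m - x$n else x$i) = lborel"
proof (rule distr_lborel_eq_vec)
  let ?h = "\<lambda>v::(real, 'n) vec. \<chi> i. if i = m then v $ m + v $ n else v $ i"
  let ?g = "\<lambda>v::(real, 'n) vec. \<chi> i. if i = m then v $ m - v $ n else v $ i"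
  have lin: "linear ?h"
    by (rule linearI) (auto simp: algebra_simps plus_vec_def scaleR_vec_def vec_eq_iff)
  have ling: "linear ?g"
    by (rule linearI) (auto simp: algebra_simps plus_vec_def scaleR_vec_def vec_eq_iff)
  show "?g \<in> borel_measurable borel" using ling by (rule linear_borel_measurable)
  have meq: "measure lebesgue (?h ` (cbox a b)) = 1 * measure lebesgue (cbox a b)" for a b
  proof (cases "cbox a b = {}")
    case True then show ?thesis by simp
  next
    case False
    then have ne: "(+) (\<chi> i. if i = n then - a $ n else 0) ` cbox a b \<noteq> {}"
      by auto
    let ?v = "\<chi> i. if i = n then - a $ n else 0"
    have "?h ` cbox a b
          = (+) (\<chi> i. if i = m \<or> i = n then a $ n else 0) ` ?h ` (+) ?v ` (cbox a b)"
      using \<open>m \<noteq> n\<close> unfolding image_comp o_def by (force simp: vec_eq_iff)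
    then have "measure lebesgue (?h ` (cbox a b))
             = measure lebesgue ((\<lambda>v. \<chi> i. if i = m then v $ m + v $ n else v $ i) `
                                 (+) ?v ` cbox a b)"
      by (rule ssubst) (rule measure_translation)
    also have "\<dots> = measure lebesgue ((\<lambda>v. \<chi> i. if i = m then v $ m + v $ n else v $ i) ` cbox (?v +a) (?v + b))"
      by (metis (no_types, lifting) cbox_translation)
    also have "\<dots> = measure lebesgue ((+) ?v ` cbox a b)"
      apply (subst measure_shear_interval)
      using \<open>m \<noteq> n\<close> ne apply auto
      apply (simp add: cbox_translation)
      by (metis cbox_borel cbox_translation measure_completion sets_lborel)
    also have "\<dots> = measure lebesgue (cbox a b)"
      by (rule measure_translation)
    finally show ?thesis by simp
  qed
  fix l u :: "real^'n" assume le: "\<And>i. l$i \<le> u$i"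
  have pre: "?g -` box l u = ?h ` box l u"
  proof
    show "?g -` box l u \<subseteq> ?h ` box l u"
    proof
      fix x assume "x \<in> ?g -` box l u"
      moreover have "x = ?h (?g x)" using \<open>m \<noteq> n\<close> by (simp add: vec_eq_iff)
      ultimately show "x \<in> ?h ` box l u" by blast
    qed
    show "?h ` box l u \<subseteq> ?g -` box l u"
      using \<open>m \<noteq> n\<close> by (auto simp: vec_eq_iff)
  qed
  have bl: "box l u \<in> lmeasurable" by simp
  from measure_linear_sufficient[OF lin bl meq]
  have hm: "?h ` box l u \<in> lmeasurable" and hmeq: "measure lebesgue (box l u) = measure lebesgue (?h ` box l u)"
    by auto
  have gs: "?g -` box l u \<in> sets borel"
    using \<open>?g \<in> borel_measurable borel\<close> by (simp add: measurable_sets_borel)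
  have "emeasure lborel (?g -` box l u) = emeasure lebesgue (?g -` box l u)"
    using gs by simp
  also have "\<dots> = measure lebesgue (?h ` box l u)"
    unfolding pre using hm by (simp add: emeasure_eq_measure2)
  also have "\<dots> = measure lebesgue (box l u)" using hmeq by simp
  also have "\<dots> = emeasure lebesgue (box l u)" using bl by (simp add: emeasure_eq_measure2)
  also have "\<dots> = emeasure lborel (box l u)" by simp
  finally show "emeasure lborel (?g -` box l u) = emeasure lborel (box l u)" .
qed

lemma cov_linear_aux:
  fixes f :: "real^'n::finite \<Rightarrow> real^'n"
  assumes "linear f"
  shows "inj f \<longrightarrow> (\<forall>g::real^'n \<Rightarrow> ennreal. g \<in> borel_measurable borel \<longrightarrow>
           (\<integral>\<^sup>+x. g (f x) \<partial>lborel) * ennreal \<bar>det (matrix f)\<bar> = (\<integral>\<^sup>+x. g x \<partial>lborel))"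
  using assms
proof (induction f rule: induct_linear_elementary[consumes 1, case_names comp zeroes const swap idplus])
  case (comp f g)
  show ?case
  proof (intro impI allI)
    fix h :: "real^'n \<Rightarrow> ennreal"
    assume inj: "inj (f \<circ> g)" and h: "h \<in> borel_measurable borel"
    have ig: "inj g" using inj by (rule inj_on_imageI2)
    have sg: "surj g" using comp.hyps(2) ig by (rule linear_inj_imp_surj)
    have if': "inj f"
      by (metis inj sg comp_apply injI inj_eq surjD)
    have hf: "(\<lambda>x. h (f x)) \<in> borel_measurable borel"
      using h linear_borel_measurable[OF comp.hyps(1)] by measurable
    have "(\<integral>\<^sup>+x. h ((f \<circ> g) x) \<partial>lborel) * ennreal \<bar>det (matrix (f \<circ> g))\<bar>
        = ((\<integral>\<^sup>+x. (\<lambda>y. h (f y)) (g x) \<partial>lborel) * ennreal \<bar>det (matrix g)\<bar>) * ennreal \<bar>det (matrix f)\<bar>"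
      by (simp add: matrix_compose[OF comp.hyps(2) comp.hyps(1)] det_mul abs_mult ennreal_mult mult_ac)
    also have "\<dots> = (\<integral>\<^sup>+y. h (f y) \<partial>lborel) * ennreal \<bar>det (matrix f)\<bar>"
    proof -
      have "(\<integral>\<^sup>+x. h (f (g x)) \<partial>lborel) * ennreal \<bar>det (matrix g)\<bar> = (\<integral>\<^sup>+y. h (f y) \<partial>lborel)"
        using comp.IH(2) ig hf by blast
      then show ?thesis by simp
    qed
    also have "\<dots> = (\<integral>\<^sup>+y. h y \<partial>lborel)"
      using comp.IH(1) if' h by simp
    finally show "(\<integral>\<^sup>+x. h ((f \<circ> g) x) \<partial>lborel) * ennreal \<bar>det (matrix (f \<circ> g))\<bar> = (\<integral>\<^sup>+y. h y \<partial>lborel)" .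
  qed
next
  case (zeroes f i)
  show ?case
  proof
    assume "inj f"
    then have "surj f" using zeroes.hyps(1) linear_inj_imp_surj by blast
    then obtain x where "f x = axis i 1" by (metis surjD)
    then have "f x $ i = 1" by (simp add: axis_def)
    with zeroes.hyps(2) have False by simp
    then show "\<forall>g::real^'n \<Rightarrow> ennreal. g \<in> borel_measurable borel \<longrightarrow>
           (\<integral>\<^sup>+x. g (f x) \<partial>lborel) * ennreal \<bar>det (matrix f)\<bar> = (\<integral>\<^sup>+x. g x \<partial>lborel)" ..
  qed
next
  case (const c)
  let ?f = "\<lambda>x::real^'n. \<chi> i. c i * x$i"
  show ?case
  proof (intro impI allI)
    fix g :: "real^'n \<Rightarrow> ennreal"
    assume inj: "inj ?f" and g: "g \<in> borel_measurable borel"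
    have cnz: "c i \<noteq> 0" for i
    proof
      assume "c i = 0"
      then have "?f (axis i 1) = ?f 0" by (simp add: vec_eq_iff axis_def)
      with inj have "axis i (1::real) = 0" by (meson injD)
      then show False by (simp add: axis_eq_0_iff)
    qed
    have T: "(\<lambda>x::real^'n. 0 + (\<Sum>j\<in>Basis. (c (axis_index j) * (x \<bullet> j)) *\<^sub>R j)) = ?f"
      using vec_lambda_eq_sum[of "\<lambda>k t. c k * t"] by (simp add: fun_eq_iff)
    have L: "lborel = density (distr lborel borel ?f) (\<lambda>_. (\<Prod>j\<in>(Basis::(real^'n) set). \<bar>c (axis_index j)\<bar>))"
    proof -
      have "lborel = density (distr lborel borel (\<lambda>x::real^'n. 0 + (\<Sum>j\<in>Basis. (c (axis_index j) * (x \<bullet> j)) *\<^sub>R j)))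
          (\<lambda>_. (\<Prod>j\<in>(Basis::(real^'n) set). \<bar>c (axis_index j)\<bar>))"
        by (rule lborel_affine_euclidean[where c="\<lambda>j. c (axis_index j)" and t=0]) (simp add: cnz)
      then show ?thesis unfolding T .
    qed
    have pr: "(\<Prod>j\<in>(Basis::(real^'n) set). \<bar>c (axis_index j)\<bar>) = \<bar>det (matrix ?f)\<bar>"
    proof -
      have "det (matrix ?f) = (\<Prod>i\<in>UNIV. c i)"
        by (subst det_diagonal) (auto simp: matrix_def axis_def)
      then show ?thesis by (simp add: prod_Basis_vec abs_prod)
    qed
    have mf: "?f \<in> borel_measurable borel"
      by (rule linear_borel_measurable) (rule linearI, auto simp: vec_eq_iff algebra_simps)
    have "(\<integral>\<^sup>+x. g x \<partial>lborel) = (\<integral>\<^sup>+x. g x \<partial>density (distr lborel borel ?f) (\<lambda>_. (\<Prod>j\<in>(Basis::(real^'n) set). \<bar>c (axis_index j)\<bar>)))"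
      using arg_cong[where f="\<lambda>M. integral\<^sup>N M g", OF L] .
    also have "\<dots> = (\<integral>\<^sup>+x. ennreal \<bar>det (matrix ?f)\<bar> * g x \<partial>distr lborel borel ?f)"
      using g mf by (simp add: nn_integral_density pr)
    also have "\<dots> = (\<integral>\<^sup>+x. ennreal \<bar>det (matrix ?f)\<bar> * g (?f x) \<partial>lborel)"
      using g mf by (simp add: nn_integral_distr)
    also have "\<dots> = (\<integral>\<^sup>+x. g (?f x) * ennreal \<bar>det (matrix ?f)\<bar> \<partial>lborel)"
      by (simp add: mult.commute)
    also have "\<dots> = (\<integral>\<^sup>+x. g (?f x) \<partial>lborel) * ennreal \<bar>det (matrix ?f)\<bar>"
      by (rule nn_integral_multc) (use g mf in measurable)
    finally show "(\<integral>\<^sup>+x. g (?f x) \<partial>lborel) * ennreal \<bar>det (matrix ?f)\<bar> = (\<integral>\<^sup>+x. g x \<partial>lborel)" by simp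
  qed
next
  case (swap m n)
  let ?h = "\<lambda>v::(real, 'n) vec. \<chi> i. v $ Transposition.transpose m n i"
  have lin: "linear ?h"
    by (rule linearI) (simp_all add: plus_vec_def scaleR_vec_def)
  have "(\<chi> i j. if Transposition.transpose m n i = j then 1 else 0) = (\<chi> i j. if j = Transposition.transpose m n i then 1 else (0::real))"
    by (auto intro!: Cart_lambda_cong)
  then have "matrix ?h = transpose(\<chi> i j. mat 1 $ i $ Transposition.transpose m n j)"
    by (auto simp: matrix_eq transpose_def axis_def mat_def matrix_def)
  then have 1: "\<bar>det (matrix ?h)\<bar> = 1"
    by (simp add: det_permute_columns permutes_swap_id sign_swap_id abs_mult)
  show ?case
  proof (intro impI allI)
    fix g :: "real^'n \<Rightarrow> ennreal"
    assume g: "g \<in> borel_measurable borel"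
    have "(\<integral>\<^sup>+x. g (?h x) \<partial>lborel) = (\<integral>\<^sup>+x. g x \<partial>distr lborel borel ?h)"
      using g linear_borel_measurable[OF lin] by (simp add: nn_integral_distr)
    also have "\<dots> = (\<integral>\<^sup>+x. g x \<partial>lborel)" by (simp add: swap_preserving)
    finally show "(\<integral>\<^sup>+x. g (?h x) \<partial>lborel) * ennreal \<bar>det (matrix ?h)\<bar> = (\<integral>\<^sup>+x. g x \<partial>lborel)"
      by (simp add: 1)
  qed
next
  case (idplus m n)
  let ?h = "\<lambda>v::(real, 'n) vec. \<chi> i. if i = m then v $ m + v $ n else v $ i"
  let ?g = "\<lambda>v::(real, 'n) vec. \<chi> i. if i = m then v $ m - v $ n else v $ i"
  have lin: "linear ?h"
    by (rule linearI) (auto simp: algebra_simps plus_vec_def scaleR_vec_def vec_eq_iff)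
  have ling: "linear ?g"
    by (rule linearI) (auto simp: algebra_simps plus_vec_def scaleR_vec_def vec_eq_iff)
  have "matrix ?h = (\<chi> k. if k = m then row m (mat 1) + 1 *s row n (mat 1) else row k (mat 1))"
    by (auto simp: vec_eq_iff matrix_def row_def mat_def axis_def)
  then have 1: "\<bar>det (matrix ?h)\<bar> = 1"
    using det_row_operation[OF idplus.hyps, of "mat 1 :: real^'n^'n" "1::real"] by simp
  show ?case
  proof (intro impI allI)
    fix G :: "real^'n \<Rightarrow> ennreal"
    assume G: "G \<in> borel_measurable borel"
    have GH: "(\<lambda>x. G (?h x)) \<in> borel_measurable borel"
      using G linear_borel_measurable[OF lin] by measurable
    have hg: "?h (?g x) = x" for x using idplus.hyps by (simp add: vec_eq_iff)
    have "(\<integral>\<^sup>+x. G x \<partial>lborel) = (\<integral>\<^sup>+x. G (?h (?g x)) \<partial>lborel)" by (simp only: hg)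
    also have "\<dots> = (\<integral>\<^sup>+x. G (?h x) \<partial>distr lborel borel ?g)"
      using GH linear_borel_measurable[OF ling] by (simp add: nn_integral_distr)
    also have "\<dots> = (\<integral>\<^sup>+x. G (?h x) \<partial>lborel)" by (simp add: shear_preserving[OF idplus.hyps])
    finally show "(\<integral>\<^sup>+x. G (?h x) \<partial>lborel) * ennreal \<bar>det (matrix ?h)\<bar> = (\<integral>\<^sup>+x. G x \<partial>lborel)"
      by (simp add: 1)
  qed
qed

lemma cov_linear:
  fixes f :: "real^'n::finite \<Rightarrow> real^'n" and g :: "real^'n \<Rightarrow> ennreal"
  assumes "linear f" "inj f" "g \<in> borel_measurable borel"
  shows "(\<integral>\<^sup>+x. g (f x) \<partial>lborel) * ennreal \<bar>det (matrix f)\<bar> = (\<integral>\<^sup>+x. g x \<partial>lborel)"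
  using cov_linear_aux[OF assms(1)] assms(2,3) by blast

lemma gauss_1d: "(\<integral>\<^sup>+t. ennreal (exp (-(t^2/2))) \<partial>lborel) = ennreal (sqrt (2*pi))"
proof -
  have "(\<integral>\<^sup>+t. ennreal (normal_density 0 1 t) \<partial>lborel) = 1"
    by (subst nn_integral_eq_integral) (auto simp: normal_density_nonneg)
  moreover have "(\<lambda>t. ennreal (exp (-(t^2/2)))) = (\<lambda>t. ennreal (sqrt (2*pi)) * ennreal (normal_density 0 1 t))"
    by (auto simp: fun_eq_iff normal_density_def ennreal_mult'[symmetric] real_sqrt_mult)
  ultimately show ?thesis
    by (simp add: nn_integral_cmult)
qed

lemma gauss_std: "integral\<^sup>N lborel (\<lambda>x::real^'n::finite. ennreal (exp (-((norm x)^2)/2))) = ennreal (sqrt (2*pi) ^ CARD('n))"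
proof -
  have eq: "exp (-((norm x)^2)/2) = (\<Prod>b\<in>(Basis::(real^'n) set). exp (-((x \<bullet> b)^2)/2))" for x :: "real^'n"
  proof -
    have "(norm x)^2 = (\<Sum>b\<in>(Basis::(real^'n) set). (x \<bullet> b)^2)"
      unfolding power2_norm_eq_inner by (subst euclidean_inner) (simp add: power2_eq_square)
    then show ?thesis
      by (simp add: exp_sum[symmetric] sum_divide_distrib[symmetric] sum_negf)
  qed
  have "integral\<^sup>N lborel (\<lambda>x::real^'n. ennreal (exp (-((norm x)^2)/2)))
      = integral\<^sup>N lborel (\<lambda>x::real^'n. ennreal (\<Prod>b\<in>(Basis::(real^'n) set). (\<lambda>b t. exp (-(t^2)/2)) b (x \<bullet> b)))"
    by (intro nn_integral_cong arg_cong[where f=ennreal] eq)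
  also have "\<dots> = (\<Prod>b\<in>(Basis::(real^'n) set). (\<integral>\<^sup>+t. ennreal (exp (-(t^2)/2)) \<partial>lborel))"
    by (subst prod_ennreal[symmetric], simp, subst nn_integral_lborel_prod[where f="\<lambda>b t. ennreal (exp (-(t^2)/2))"]) auto
  also have "\<dots> = ennreal (sqrt (2*pi)) ^ CARD('n)"
    by (simp add: gauss_1d)
  finally show ?thesis by (simp add: ennreal_power)
qed

lemma gauss_shift: "integral\<^sup>N lborel (\<lambda>x::real^'n::finite. ennreal (exp (-((norm (x - c))^2)/2))) = ennreal (sqrt (2*pi) ^ CARD('n))"
proof -
  have "integral\<^sup>N lborel (\<lambda>x::real^'n. ennreal (exp (-((norm (x - c))^2)/2)))
      = integral\<^sup>N lborel (\<lambda>x::real^'n. (\<lambda>y. ennreal (exp (-((norm y)^2)/2))) ((-c) + x))"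
    by simp
  also have "\<dots> = integral\<^sup>N (distr lborel borel ((+) (-c))) (\<lambda>y::real^'n. ennreal (exp (-((norm y)^2)/2)))"
    by (subst nn_integral_distr) auto
  also have "\<dots> = ennreal (sqrt (2*pi) ^ CARD('n))"
    by (simp only: lborel_distr_plus gauss_std)
  finally show ?thesis .
qed

lemma gauss_A:
  fixes A :: "real^'n::finite^'n" and mu :: "real^'n"
  assumes "det A \<noteq> 0"
  shows "integral\<^sup>N lborel (\<lambda>x. ennreal (exp (-((norm (A *v (x - mu)))^2)/2)))
           = ennreal (sqrt (2*pi) ^ CARD('n) / \<bar>det A\<bar>)"
proof -
  let ?f = "(*v) A"
  have lin: "linear ?f" by simp
  have mf: "matrix ?f = A" by (simp add: matrix_of_matrix_vector_mul)
  have inj: "inj ?f" using det_nz_iff_inj[OF lin] assms mf by simp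
  let ?g = "\<lambda>y::real^'n. ennreal (exp (-((norm (y - A *v mu))^2)/2))"
  have gm: "?g \<in> borel_measurable borel" by measurable
  have "(\<integral>\<^sup>+x. ?g (?f x) \<partial>lborel) * ennreal \<bar>det A\<bar> = (\<integral>\<^sup>+x. ?g x \<partial>lborel)"
    using cov_linear[OF lin inj gm] mf by simp
  also have "\<dots> = ennreal (sqrt (2*pi) ^ CARD('n))" by (rule gauss_shift)
  finally have eq: "(\<integral>\<^sup>+x. ennreal (exp (-((norm (A *v (x - mu)))^2)/2)) \<partial>lborel) * ennreal \<bar>det A\<bar>
      = ennreal (sqrt (2*pi) ^ CARD('n))"
    by (simp add: matrix_vector_mult_diff_distrib)
  have dpos: "\<bar>det A\<bar> > 0" using assms by simp
  have "(\<integral>\<^sup>+x. ennreal (exp (-((norm (A *v (x - mu)))^2)/2)) \<partial>lborel)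
      = (\<integral>\<^sup>+x. ennreal (exp (-((norm (A *v (x - mu)))^2)/2)) \<partial>lborel) * ennreal \<bar>det A\<bar> * ennreal (1 / \<bar>det A\<bar>)"
    using dpos by (simp add: mult.assoc ennreal_mult''[symmetric])
  also have "\<dots> = ennreal (sqrt (2*pi) ^ CARD('n)) * ennreal (1 / \<bar>det A\<bar>)" by (simp only: eq)
  also have "\<dots> = ennreal (sqrt (2*pi) ^ CARD('n) / \<bar>det A\<bar>)"
    by (simp add: ennreal_mult''[symmetric])
  finally show ?thesis .
qed



lemma gram_entry:
  fixes X :: "real^'n::finite^'m::finite"
  shows "(transpose X ** X) $ i $ j = (X *v axis i 1) \<bullet> (X *v axis j 1)"
  unfolding matrix_vector_mult_basis
  by (simp add: matrix_matrix_mult_def transpose_def inner_vec_def column_def)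

lemma gram_eq_from_norm:
  fixes A :: "real^'n::finite^'k::finite" and B :: "real^'n^'m::finite"
  assumes "\<And>x. norm (A *v x) = norm (B *v x)"
  shows "transpose A ** A = transpose B ** B"
proof -
  have "(A *v u) \<bullet> (A *v v) = (B *v u) \<bullet> (B *v v)" for u v
  proof -
    have "(A *v u) \<bullet> (A *v v) = ((norm (A *v u + A *v v))^2 - (norm (A *v u))^2 - (norm (A *v v))^2) / 2"
      by (simp add: dot_norm)
    also have "\<dots> = ((norm (A *v (u + v)))^2 - (norm (A *v u))^2 - (norm (A *v v))^2) / 2"
      by (simp add: matrix_vector_right_distrib)
    also have "\<dots> = ((norm (B *v (u + v)))^2 - (norm (B *v u))^2 - (norm (B *v v))^2) / 2"
      by (simp only: assms)
    also have "\<dots> = (B *v u) \<bullet> (B *v v)"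
      by (simp add: dot_norm matrix_vector_right_distrib)
    finally show ?thesis .
  qed
  then show ?thesis by (simp add: vec_eq_iff gram_entry)
qed

lemma iso_aux:
  fixes S :: "'a::euclidean_space set" and T :: "'b::euclidean_space set"
  assumes "subspace S" "subspace T" "dim S = dim T"
  obtains f :: "'a \<Rightarrow> 'b" where "linear f" "\<And>x. x \<in> S \<Longrightarrow> norm (f x) = norm x"
proof (rule isometries_subspaces[OF assms])
  fix f g
  assume lf: "linear f" and "linear g" "f ` S = T" "g ` T = S"
    and n: "\<And>x. x \<in> S \<Longrightarrow> norm (f x) = norm x"
    and "\<And>x. x \<in> T \<Longrightarrow> norm (g x) = norm x" "\<And>x. x \<in> S \<Longrightarrow> g (f x) = x" "\<And>x. x \<in> T \<Longrightarrow> f (g x) = x"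
  show thesis by (rule that[OF lf n])
qed

lemma square_factor:
  fixes B :: "real^'n::finite^'m::finite"
  assumes injB: "inj ((*v) B)"
  obtains A :: "real^'n^'n" where "det A \<noteq> 0" "\<And>x. norm (A *v x) = norm (B *v x)"
    "transpose A ** A = transpose B ** B"
proof -
  let ?S = "range ((*v) B)"
  have sS: "subspace ?S" by (rule linear_subspace_image) (simp_all add: subspace_UNIV)
  have sT: "subspace (UNIV :: (real^'n) set)" by (rule subspace_UNIV)
  have "rank B = CARD('n)" using injB full_rank_injective by blast
  then have dS: "dim ?S = CARD('n)" by (simp add: rank_dim_range)
  have dT: "dim (UNIV :: (real^'n) set) = CARD('n)" by simp
  have dd: "dim ?S = dim (UNIV :: (real^'n) set)" using dS dT by simp
  obtain h :: "real^'m \<Rightarrow> real^'n" where lh: "linear h" and hn: "\<And>y. y \<in> ?S \<Longrightarrow> norm (h y) = norm y"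
    using iso_aux[OF sS sT dd] by blast
  let ?A = "matrix (h \<circ> (*v) B)"
  have lc: "linear (h \<circ> (*v) B)" using lh by (simp add: linear_compose)
  have Av: "?A *v x = h (B *v x)" for x using matrix_vector_mul(2)[OF lc] by (metis comp_apply)
  have nA: "norm (?A *v x) = norm (B *v x)" for x using Av hn by simp
  have "inj ((*v) ?A)"
  proof (rule injI)
    fix x y assume "?A *v x = ?A *v y"
    then have "?A *v (x - y) = 0" by (simp add: matrix_vector_mult_diff_distrib)
    then have "norm (B *v (x - y)) = 0" using nA[of "x - y"] by simp
    then have "B *v x = B *v y" by (simp add: matrix_vector_mult_diff_distrib)
    then show "x = y" using injB by (meson injD)
  qed
  then have "det ?A \<noteq> 0"
    using det_nz_iff_inj[of "(*v) ?A"] by (simp add: matrix_of_matrix_vector_mul)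
  moreover have "transpose ?A ** ?A = transpose B ** B" using gram_eq_from_norm nA by blast
  ultimately show ?thesis using that nA by blast
qed


lemma matrix_inv_unique':
  fixes A B :: "real^'n::finite^'n"
  assumes "A ** B = mat 1" "B ** A = mat 1"
  shows "matrix_inv A = B"
proof -
  let ?A' = "matrix_inv A"
  have "A ** ?A' = mat 1 \<and> ?A' ** A = mat 1"
    unfolding matrix_inv_def by (rule someI[of _ B]) (use assms in simp)
  then have "?A' = ?A' ** (A ** B)" "?A' ** A = mat 1" using assms by (simp_all add: matrix_mul_rid)
  then show ?thesis by (simp add: matrix_mul_assoc matrix_mul_lid)
qed

lemma matrix_inv_props:
  fixes A :: "real^'n::finite^'n"
  assumes "invertible A"
  shows "A ** matrix_inv A = mat 1" "matrix_inv A ** A = mat 1"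
proof -
  have "A ** matrix_inv A = mat 1 \<and> matrix_inv A ** A = mat 1"
    using assms unfolding matrix_inv_def invertible_def by (rule someI_ex)
  then show "A ** matrix_inv A = mat 1" "matrix_inv A ** A = mat 1" by auto
qed

lemma inner_transpose:
  fixes M :: "real^'n::finite^'m::finite"
  shows "(M *v u) \<bullet> v = u \<bullet> (transpose M *v v)"
  by (metis dot_lmul_matrix inner_commute vector_transpose_matrix)

lemma norm_diff_sq:
  fixes a b :: "'a::real_inner"
  shows "(norm (a - b))^2 = (norm a)^2 - 2 * (a \<bullet> b) + (norm b)^2"
  by (simp add: power2_norm_eq_inner inner_diff_left inner_diff_right inner_commute)

lemma pointwise:
  fixes K :: "real^'n::finite^'m::finite" and z :: "'m \<Rightarrow> 'z"
  assumes injK: "inj ((*v) K)" and spos: "\<And>i. s2 i (z i) > 0" and fnn: "\<And>i. f i (z i) \<ge> 0"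
    and Cpos: "C > 0"
  shows "ennreal (glm_unnorm K mu s2 f x z / C)
       = (\<integral>\<^sup>+y. ennreal (glm_unnorm K mu s2 f y z / C) \<partial>lborel)
         * ennreal (mvn_density (glm_mu K mu s2 z) (glm_Sigma K s2 z) x)"
proof -
  define s where "s i = s2 i (z i)" for i
  have sp: "s i > 0" for i using spos by (simp add: s_def)
  have snz: "s i \<noteq> 0" for i using sp[of i] by simp
  have sqp: "sqrt (s i) > 0" for i using sp[of i] by simp
  have sqnz: "sqrt (s i) \<noteq> 0" for i using sp[of i] by simp
  have sqsq: "sqrt (s i) * sqrt (s i) = s i" for i using sp[of i] by simp
  define Dinv :: "real^'m^'m" where "Dinv = (\<chi> i j. if i = j then 1 / s i else 0)"
  have D: "glm_Sigma0 s2 z = (\<chi> i j. if i = j then s i else 0)"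
    by (simp add: glm_Sigma0_def s_def vec_eq_iff)
  have Dinv: "matrix_inv (glm_Sigma0 s2 z) = Dinv"
  proof (rule matrix_inv_unique')
    show "glm_Sigma0 s2 z ** Dinv = mat 1"
      using snz sqnz sqsq by (simp add: D Dinv_def vec_eq_iff matrix_matrix_mult_def mat_def if_distrib[of "\<lambda>a. _ * a"] cong: if_cong)
    show "Dinv ** glm_Sigma0 s2 z = mat 1"
      using snz sqnz sqsq by (simp add: D Dinv_def vec_eq_iff matrix_matrix_mult_def mat_def if_distrib[of "\<lambda>a. _ * a"] cong: if_cong)
  qed
  define B :: "real^'n^'m" where "B = (\<chi> i j. K$i$j / sqrt (s i))"
  have Bv: "B *v y = (\<chi> i. (K *v y)$i / sqrt (s i))" for y
    by (simp add: B_def matrix_vector_mult_def vec_eq_iff sum_divide_distrib)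
  have injB: "inj ((*v) B)"
  proof (rule injI)
    fix u v assume "B *v u = B *v v"
    then have "\<forall>i. (K *v u)$i / sqrt (s i) = (K *v v)$i / sqrt (s i)" by (simp add: Bv vec_eq_iff)
    then have "K *v u = K *v v" using snz sqnz sqsq by (simp add: vec_eq_iff)
    then show "u = v" using injK by (meson injD)
  qed
  define P where "P = transpose K ** Dinv ** K"
  have PB: "P = transpose B ** B"
    using snz sqnz sqsq by (simp add: P_def B_def Dinv_def vec_eq_iff matrix_matrix_mult_def transpose_def
        if_distrib[of "\<lambda>a. _ * a"] sum_divide_distrib algebra_simps power2_eq_square[symmetric] cong: if_cong)
  obtain A :: "real^'n^'n" where dA: "det A \<noteq> 0" and nA: "\<And>y. norm (A *v y) = norm (B *v y)"
    and AA: "transpose A ** A = transpose B ** B"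
    using square_factor[OF injB] by blast
  have PA: "P = transpose A ** A" using PB AA by simp
  have detP: "det P = (det A)^2" by (simp add: PA det_mul power2_eq_square)
  have invP: "invertible P" using detP dA by (simp add: invertible_det_nz)
  define S where "S = matrix_inv P"
  have PS: "P ** S = mat 1" "S ** P = mat 1" using matrix_inv_props[OF invP] by (simp_all add: S_def)
  have Sig: "glm_Sigma K s2 z = S" by (simp add: glm_Sigma_def Dinv S_def P_def)
  have invS: "matrix_inv S = P" by (rule matrix_inv_unique'[OF PS(2) PS(1)])
  have detS: "det S = 1 / (det A)^2"
  proof -
    have "det P * det S = 1" using PS(1) by (metis det_I det_mul)
    then show ?thesis using detP dA by (simp add: field_simps)
  qed
  define w :: "real^'m" where "w = (\<chi> i. mu i (z i) / sqrt (s i))"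
  define m where "m = glm_mu K mu s2 z"
  have KD: "transpose K *v (Dinv *v glm_mu0 mu z) = transpose B *v w"
    using snz sqnz sqsq by (simp add: B_def Dinv_def w_def glm_mu0_def vec_eq_iff matrix_vector_mult_def transpose_def
        if_distrib[of "\<lambda>a. _ * a"] algebra_simps power2_eq_square[symmetric] cong: if_cong)
  have m_def': "m = S *v (transpose B *v w)"
    unfolding m_def glm_mu_def Sig Dinv KD ..
  have Pm: "P *v m = transpose B *v w"
    by (simp add: m_def' matrix_vector_mul_assoc PS(1) matrix_vector_mul_lid)
  define r where "r = (norm w)^2 - (norm (A *v m))^2"
  have key: "(\<Sum>i\<in>UNIV. ((K *v y)$i - mu i (z i))^2 / s i) = (norm (A *v (y - m)))^2 + r" for y
  proof -
    have "(norm (B *v y - w))^2 = (\<Sum>i\<in>UNIV. ((B *v y - w)$i)^2)"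
      unfolding power2_norm_eq_inner inner_vec_def by (simp add: power2_eq_square)
    also have "\<dots> = (\<Sum>i\<in>UNIV. ((K *v y)$i - mu i (z i))^2 / s i)"
    proof (rule sum.cong)
      fix i
      have "(B *v y - w)$i = ((K *v y)$i - mu i (z i)) / sqrt (s i)"
        by (simp add: Bv w_def diff_divide_distrib)
      then show "((B *v y - w)$i)^2 = ((K *v y)$i - mu i (z i))^2 / s i"
        using sp[of i] by (simp add: power_divide)
    qed simp
    finally have a: "(\<Sum>i\<in>UNIV. ((K *v y)$i - mu i (z i))^2 / s i) = (norm (B *v y - w))^2" by simp
    have c: "(B *v y) \<bullet> w = (A *v y) \<bullet> (A *v m)"
    proof -
      have "(B *v y) \<bullet> w = y \<bullet> (transpose B *v w)" by (rule inner_transpose)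
      also have "\<dots> = y \<bullet> (transpose A *v (A *v m))"
        by (simp only: Pm[symmetric] PA matrix_vector_mul_assoc)
      also have "\<dots> = (A *v y) \<bullet> (A *v m)" by (simp add: inner_transpose)
      finally show ?thesis .
    qed
    have "(norm (B *v y - w))^2 = (norm (B *v y))^2 - 2 * ((B *v y) \<bullet> w) + (norm w)^2"
      by (rule norm_diff_sq)
    also have "\<dots> = (norm (A *v y))^2 - 2 * ((A *v y) \<bullet> (A *v m)) + (norm w)^2"
      by (simp add: nA c)
    also have "\<dots> = (norm (A *v y - A *v m))^2 + r"
      by (simp add: norm_diff_sq r_def)
    also have "\<dots> = (norm (A *v (y - m)))^2 + r"
      by (simp add: matrix_vector_mult_diff_distrib)
    finally show ?thesis using a by simp
  qed
  define G where "G y = exp (-((norm (A *v (y - m)))^2)/2)" for y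
  define c1 where "c1 = (\<Prod>i\<in>UNIV. f i (z i) / sqrt (2 * pi * s i))"
  define k0 where "k0 = c1 * exp (-r/2)"
  have c1nn: "c1 \<ge> 0" unfolding c1_def using fnn sp by (intro prod_nonneg) (simp add: less_imp_le)
  have k0nn: "k0 \<ge> 0" unfolding k0_def using c1nn by simp
  have un: "glm_unnorm K mu s2 f y z = k0 * G y" for y
  proof -
    have fac: "normal_density (mu i (z i)) (sqrt (s2 i (z i))) ((K *v y)$i) * f i (z i)
        = f i (z i) / sqrt (2 * pi * s i) * exp (-((((K *v y)$i - mu i (z i))^2 / s i)/2))" for i
      using sp[of i] by (simp add: normal_density_def s_def[symmetric] field_simps)
    have "glm_unnorm K mu s2 f y z = (\<Prod>i\<in>UNIV. f i (z i) / sqrt (2 * pi * s i) * exp (-((((K *v y)$i - mu i (z i))^2 / s i)/2)))"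
      unfolding glm_unnorm_def by (simp only: fac)
    also have "\<dots> = c1 * exp (\<Sum>i\<in>UNIV. -((((K *v y)$i - mu i (z i))^2 / s i)/2))"
      unfolding prod.distrib c1_def by (simp add: exp_sum)
    also have "(\<Sum>i\<in>UNIV. -((((K *v y)$i - mu i (z i))^2 / s i)/2)) = -((\<Sum>i\<in>UNIV. ((K *v y)$i - mu i (z i))^2 / s i)/2)"
      by (simp add: sum_negf sum_divide_distrib)
    also have "\<dots> = -((norm (A *v (y - m)))^2)/2 + (-r/2)"
      by (simp add: key field_simps)
    finally show ?thesis unfolding G_def k0_def by (simp only: exp_add mult_ac)
  qed
  have mvn: "mvn_density m (glm_Sigma K s2 z) x = G x * \<bar>det A\<bar> / sqrt (2*pi) ^ CARD('n)"
  proof -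
    have q: "(x - m) \<bullet> (matrix_inv S *v (x - m)) = (norm (A *v (x - m)))^2"
    proof -
      have "(x - m) \<bullet> (matrix_inv S *v (x - m)) = (x - m) \<bullet> (transpose A *v (A *v (x - m)))"
        by (simp only: invS PA matrix_vector_mul_assoc)
      also have "\<dots> = (A *v (x - m)) \<bullet> (A *v (x - m))"
        by (simp only: inner_transpose)
      finally show ?thesis by (simp only: power2_norm_eq_inner)
    qed
    have sq: "sqrt ((2 * pi) ^ CARD('n) * det S) = sqrt (2*pi) ^ CARD('n) / \<bar>det A\<bar>"
    proof -
      have e1: "sqrt ((2 * pi) ^ CARD('n)) = sqrt (2*pi) ^ CARD('n)" by (rule real_sqrt_power)
      have e2: "sqrt (1 / (det A)^2) = 1 / \<bar>det A\<bar>" by (simp add: real_sqrt_divide)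
      show ?thesis by (simp only: detS real_sqrt_mult e1 e2) simp
    qed
    show ?thesis
      unfolding mvn_density_def Sig q sq G_def using dA by (simp add: field_simps)
  qed
  have Gnn: "G y \<ge> 0" for y by (simp add: G_def)
  have Am: "((*v) A) \<in> borel_measurable borel" by (rule linear_borel_measurable) simp
  have Gm: "(\<lambda>y. ennreal (G y)) \<in> borel_measurable borel"
    unfolding G_def using Am by measurable
  define Q where "Q = sqrt (2*pi) ^ CARD('n)"
  have Qp: "Q > 0" by (simp add: Q_def)
  have int: "(\<integral>\<^sup>+y. ennreal (glm_unnorm K mu s2 f y z / C) \<partial>lborel) = ennreal (k0 / C) * ennreal (Q / \<bar>det A\<bar>)"
  proof -
    have "(\<integral>\<^sup>+y. ennreal (glm_unnorm K mu s2 f y z / C) \<partial>lborel) = (\<integral>\<^sup>+y. ennreal (k0 / C) * ennreal (G y) \<partial>lborel)"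
      using k0nn Cpos Gnn by (intro nn_integral_cong) (simp add: un ennreal_mult[symmetric])
    also have "\<dots> = ennreal (k0 / C) * (\<integral>\<^sup>+y. ennreal (G y) \<partial>lborel)"
      using Gm by (simp add: nn_integral_cmult)
    also have "(\<integral>\<^sup>+y. ennreal (G y) \<partial>lborel) = ennreal (Q / \<bar>det A\<bar>)"
      unfolding G_def Q_def by (rule gauss_A[OF dA])
    finally show ?thesis .
  qed
  have "ennreal (k0 / C) * ennreal (Q / \<bar>det A\<bar>) * ennreal (mvn_density m (glm_Sigma K s2 z) x)
      = ennreal (k0 / C * (Q / \<bar>det A\<bar>) * (G x * \<bar>det A\<bar> / Q))"
    using k0nn Cpos Gnn Qp by (simp add: mvn Q_def ennreal_mult[symmetric])
  also have "k0 / C * (Q / \<bar>det A\<bar>) * (G x * \<bar>det A\<bar> / Q) = glm_unnorm K mu s2 f x z / C"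
    using dA Qp by (simp add: un field_simps)
  finally show ?thesis using int by (simp add: m_def)
qed

theorem corollary3p12:
  fixes K :: "real^'n::finite^'m::finite"
    and M :: "'m \<Rightarrow> 'z measure"
    and f mu s2 :: "'m \<Rightarrow> 'z \<Rightarrow> real"
  assumes dims: "CARD('m) \<ge> CARD('n)"
    and rankK: "rank K = CARD('n)"
    and sf: "\<And>i. sigma_finite_measure (M i)"
    and f_meas: "\<And>i. f i \<in> borel_measurable (M i)"
    and f_nonneg: "\<And>i z. z \<in> space (M i) \<Longrightarrow> f i z \<ge> 0"
    and f_int: "\<And>i. (\<integral>\<^sup>+ z. ennreal (f i z) \<partial>M i) = 1"
    and mu_meas: "\<And>i. mu i \<in> borel_measurable (M i)"
    and s2_meas: "\<And>i. s2 i \<in> borel_measurable (M i)"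
    and s2_pos: "\<And>i z. z \<in> space (M i) \<Longrightarrow> s2 i z > 0"
    and C_pos: "glm_const M K mu s2 f \<noteq> 0"
    and C_fin: "glm_const M K mu s2 f \<noteq> \<infinity>"
  shows "\<forall>x. glm_marg_X M K mu s2 f x =
           (\<integral>\<^sup>+ z. glm_marg_Z M K mu s2 f z * ennreal (mvn_density (glm_mu K mu s2 z) (glm_Sigma K s2 z) x)
              \<partial>(PiM UNIV M))"
proof
  fix x
  have injK: "inj ((*v) K)" using rankK full_rank_injective by blast
  define C where "C = enn2real (glm_const M K mu s2 f)"
  have Cp: "C > 0" using C_pos C_fin by (simp add: C_def enn2real_positive_iff top.not_eq_extremum zero_less_iff_neq_zero)
  show "glm_marg_X M K mu s2 f x =
           (\<integral>\<^sup>+ z. glm_marg_Z M K mu s2 f z * ennreal (mvn_density (glm_mu K mu s2 z) (glm_Sigma K s2 z) x)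
              \<partial>(PiM UNIV M))"
    unfolding glm_marg_X_def
  proof (rule nn_integral_cong)
    fix z assume z: "z \<in> space (PiM UNIV M)"
    then have zi: "z i \<in> space (M i)" for i by (auto simp: space_PiM)
    have sp: "s2 i (z i) > 0" for i using s2_pos[OF zi] .
    have fn: "f i (z i) \<ge> 0" for i using f_nonneg[OF zi] .
    show "ennreal (glm_joint M K mu s2 f x z) =
          glm_marg_Z M K mu s2 f z * ennreal (mvn_density (glm_mu K mu s2 z) (glm_Sigma K s2 z) x)"
      unfolding glm_marg_Z_def glm_joint_def C_def[symmetric]
      by (rule pointwise[OF injK]) (use sp fn Cp in auto)
  qed
qed

end
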